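(* The balanced elements $g\in G(e,e,n)$ with $\ell(g)=n(n-1)$ (the maximal length) are exactly the elements $\lambda^k$ with $1\le k\le e-1$.
   Context: Let $e\ge 2$, $n\ge 2$, $\zeta_e=e^{2\pi i/e}$. $G(e,e,n)$ is the group of $n\times n$ monomial matrices with nonzero entries $e$-th roots of unity whose product is $1$. For $i\in\mathbb{Z}/e\mathbb{Z}$, $t_i$ is the matrix with $(1,2)$ entry $\zeta_e^{-i}$, $(2,1)$ entry $\zeta_e^{i}$, $(j,j)$ entry $1$ for $3\le j\le n$, other entries $0$; for $3\le j\le n$, $s_j$ is the permutation matrix of the transposition $(j-1\ j)$. $X=\{t_0,\dots,t_{e-1},s_3,\dots,s_n\}$ and $\ell$ is the word length with respect to $X$. For $u,w\in G(e,e,n)$ write $u\preceq w$ if $\ell(u)+\ell(u^{-1}w)=\ell(w)$, and $u\preceq_r w$ if $\ell(wu^{-1})+\ell(u)=\ell(w)$. For $g$, $[1,g]=\{w: w\preceq g\}$, $[1,g]_r=\{w: w\preceq_r g\}$; $g$ is balanced if $[1,g]=[1,g]_r$. $\lambda=\mathrm{diag}(\zeta_e^{-(n-1)},\zeta_e,\dots,\zeta_e)$. *)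

theory Defs
  imports Complex_Main
begin

text \<open>Matrices of size n are represented as functions nat \<Rightarrow> nat \<Rightarrow> complex,
  indices in {1..n}, and entries outside {1..n} x {1..n} equal to 0.\<close>

type_synonym cmat = "nat \<Rightarrow> nat \<Rightarrow> complex"

definition zeta :: "nat \<Rightarrow> complex" where
  "zeta e = cis (2 * pi / real e)"

definition mmult :: "nat \<Rightarrow> cmat \<Rightarrow> cmat \<Rightarrow> cmat" where
  "mmult n A B = (\<lambda>i j. if i \<in> {1..n} \<and> j \<in> {1..n} then (\<Sum>k\<in>{1..n}. A i k * B k j) else 0)"

definition mone :: "nat \<Rightarrow> cmat" where
  "mone n = (\<lambda>i j. if i \<in> {1..n} \<and> i = j then 1 else 0)"

definition mpow :: "nat \<Rightarrow> cmat \<Rightarrow> nat \<Rightarrow> cmat" where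
  "mpow n A k = ((mmult n A) ^^ k) (mone n)"

definition Geen :: "nat \<Rightarrow> nat \<Rightarrow> cmat set" where
  "Geen e n = {A. (\<forall>i j. (i \<notin> {1..n} \<or> j \<notin> {1..n}) \<longrightarrow> A i j = 0) \<and>
     (\<exists>\<sigma>. bij_betw \<sigma> {1..n} {1..n} \<and>
        (\<forall>i\<in>{1..n}. \<forall>j\<in>{1..n}. A i j \<noteq> 0 \<longleftrightarrow> j = \<sigma> i) \<and>
        (\<forall>i\<in>{1..n}. (A i (\<sigma> i)) ^ e = 1) \<and>
        (\<Prod>i\<in>{1..n}. A i (\<sigma> i)) = 1)}"

definition gen_t :: "nat \<Rightarrow> nat \<Rightarrow> nat \<Rightarrow> cmat" where
  "gen_t e n i = (\<lambda>a b.
     if a = 1 \<and> b = 2 then inverse (zeta e ^ i)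
     else if a = 2 \<and> b = 1 then zeta e ^ i
     else if 3 \<le> a \<and> a \<le> n \<and> a = b then 1 else 0)"

definition gen_s :: "nat \<Rightarrow> nat \<Rightarrow> cmat" where
  "gen_s n j = (\<lambda>a b. if a \<in> {1..n} \<and> b \<in> {1..n} \<and> b = (if a = j - 1 then j else if a = j then j - 1 else a)
                       then 1 else 0)"

definition gens :: "nat \<Rightarrow> nat \<Rightarrow> cmat set" where
  "gens e n = {gen_t e n i | i. i < e} \<union> {gen_s n j | j. 3 \<le> j \<and> j \<le> n}"

definition wprod :: "nat \<Rightarrow> cmat list \<Rightarrow> cmat" where
  "wprod n ws = foldr (mmult n) ws (mone n)"

definition wlen :: "nat \<Rightarrow> nat \<Rightarrow> cmat \<Rightarrow> nat" where
  "wlen e n g = (LEAST k. \<exists>ws. set ws \<subseteq> gens e n \<and> length ws = k \<and> wprod n ws = g)"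

definition ginv :: "nat \<Rightarrow> nat \<Rightarrow> cmat \<Rightarrow> cmat" where
  "ginv e n u = (THE v. v \<in> Geen e n \<and> mmult n u v = mone n)"

definition prefix_le :: "nat \<Rightarrow> nat \<Rightarrow> cmat \<Rightarrow> cmat \<Rightarrow> bool" where
  "prefix_le e n u w \<longleftrightarrow> wlen e n u + wlen e n (mmult n (ginv e n u) w) = wlen e n w"

definition suffix_le :: "nat \<Rightarrow> nat \<Rightarrow> cmat \<Rightarrow> cmat \<Rightarrow> bool" where
  "suffix_le e n u w \<longleftrightarrow> wlen e n (mmult n w (ginv e n u)) + wlen e n u = wlen e n w"

definition interval_l :: "nat \<Rightarrow> nat \<Rightarrow> cmat \<Rightarrow> cmat set" where
  "interval_l e n g = {w \<in> Geen e n. prefix_le e n w g}"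

definition interval_r :: "nat \<Rightarrow> nat \<Rightarrow> cmat \<Rightarrow> cmat set" where
  "interval_r e n g = {w \<in> Geen e n. suffix_le e n w g}"

definition balanced :: "nat \<Rightarrow> nat \<Rightarrow> cmat \<Rightarrow> bool" where
  "balanced e n g \<longleftrightarrow> interval_l e n g = interval_r e n g"

definition lam :: "nat \<Rightarrow> nat \<Rightarrow> cmat" where
  "lam e n = (\<lambda>a b. if a = 1 \<and> b = 1 then inverse (zeta e ^ (n - 1))
                   else if 2 \<le> a \<and> a \<le> n \<and> a = b then zeta e else 0)"

end

theory Submission
  imports Defs
begin


definition mat :: "nat \<Rightarrow> (nat \<Rightarrow> nat) \<Rightarrow> (nat \<Rightarrow> complex) \<Rightarrow> cmat" where
  "mat n \<sigma> c = (\<lambda>i j. if i \<in> {1..n} \<and> j \<in> {1..n} \<and> j = \<sigma> i then c i else 0)"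

definition valid :: "nat \<Rightarrow> nat \<Rightarrow> (nat \<Rightarrow> nat) \<Rightarrow> (nat \<Rightarrow> complex) \<Rightarrow> bool" where
  "valid e n \<sigma> c \<longleftrightarrow> bij_betw \<sigma> {1..n} {1..n} \<and> (\<forall>i\<in>{1..n}. c i ^ e = 1) \<and> (\<Prod>i\<in>{1..n}. c i) = 1"

lemma mat_mult:
  assumes "\<forall>i\<in>{1..n}. \<sigma> i \<in> {1..n}"
  shows "mmult n (mat n \<sigma> c) (mat n \<tau> d) = mat n (\<tau> \<circ> \<sigma>) (\<lambda>i. c i * d (\<sigma> i))"
proof (rule ext, rule ext)
  fix i j
  show "mmult n (mat n \<sigma> c) (mat n \<tau> d) i j = mat n (\<tau> \<circ> \<sigma>) (\<lambda>i. c i * d (\<sigma> i)) i j"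
  proof (cases "i \<in> {1..n} \<and> j \<in> {1..n}")
    case True
    have "(\<Sum>k\<in>{1..n}. mat n \<sigma> c i k * mat n \<tau> d k j)
        = (\<Sum>k\<in>{1..n}. if k = \<sigma> i then c i * (if j = \<tau> (\<sigma> i) then d (\<sigma> i) else 0) else 0)"
      by (rule sum.cong) (use True in \<open>auto simp: mat_def\<close>)
    also have "\<dots> = c i * (if j = \<tau> (\<sigma> i) then d (\<sigma> i) else 0)"
      using assms True by (simp add: sum.delta)
    finally show ?thesis using True by (simp add: mmult_def mat_def)
  next
    case False
    then show ?thesis by (auto simp: mmult_def mat_def)
  qed
qed

lemma mmult_assoc: "mmult n (mmult n A B) C = mmult n A (mmult n B C)"
proof (rule ext, rule ext)
  fix i j
  show "mmult n (mmult n A B) C i j = mmult n A (mmult n B C) i j"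
  proof (cases "i \<in> {1..n} \<and> j \<in> {1..n}")
    case True
    have "mmult n (mmult n A B) C i j = (\<Sum>k\<in>{1..n}. (\<Sum>l\<in>{1..n}. A i l * B l k) * C k j)"
      using True by (auto simp: mmult_def intro!: sum.cong)
    also have "\<dots> = (\<Sum>k\<in>{1..n}. \<Sum>l\<in>{1..n}. A i l * B l k * C k j)"
      by (simp add: sum_distrib_right)
    also have "\<dots> = (\<Sum>l\<in>{1..n}. \<Sum>k\<in>{1..n}. A i l * B l k * C k j)"
      by (rule sum.swap)
    also have "\<dots> = (\<Sum>l\<in>{1..n}. A i l * (\<Sum>k\<in>{1..n}. B l k * C k j))"
      by (simp add: sum_distrib_left mult.assoc)
    also have "\<dots> = mmult n A (mmult n B C) i j"
      using True by (auto simp: mmult_def intro!: sum.cong)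
    finally show ?thesis .
  next
    case False
    then show ?thesis by (auto simp: mmult_def)
  qed
qed

lemma mone_mat: "mone n = mat n id (\<lambda>_. 1)"
  by (auto simp: mone_def mat_def fun_eq_iff)

lemma mat_cong:
  assumes "\<forall>i\<in>{1..n}. \<sigma> i = \<sigma>' i \<and> c i = c' i"
  shows "mat n \<sigma> c = mat n \<sigma>' c'"
  using assms by (auto simp: mat_def fun_eq_iff)

lemma mat_inj:
  assumes "\<forall>i\<in>{1..n}. \<sigma> i \<in> {1..n}" "\<forall>i\<in>{1..n}. c i \<noteq> 0"
    and "mat n \<sigma> c = mat n \<sigma>' c'"
  shows "\<forall>i\<in>{1..n}. \<sigma> i = \<sigma>' i \<and> c i = c' i"
proof
  fix i assume i: "i \<in> {1..n}"
  have "mat n \<sigma> c i (\<sigma> i) = c i" using i assms(1) by (simp add: mat_def)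
  moreover have "mat n \<sigma>' c' i (\<sigma> i) = mat n \<sigma> c i (\<sigma> i)" using assms(3) by simp
  ultimately show "\<sigma> i = \<sigma>' i \<and> c i = c' i"
    using i assms(2) by (auto simp: mat_def split: if_splits)
qed

lemma valid_nz: "valid e n \<sigma> c \<Longrightarrow> e \<ge> 1 \<Longrightarrow> i \<in> {1..n} \<Longrightarrow> c i \<noteq> 0"
proof
  assume v: "valid e n \<sigma> c" and e: "e \<ge> 1" and i: "i \<in> {1..n}" and c: "c i = 0"
  have "c i ^ e = 1" using v i by (simp add: valid_def)
  moreover have "c i ^ e = 0" using c e by simp
  ultimately show False by simp
qed

lemma valid_range: "valid e n \<sigma> c \<Longrightarrow> \<forall>i\<in>{1..n}. \<sigma> i \<in> {1..n}"
  unfolding valid_def bij_betw_def by blast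

lemma Geen_iff:
  assumes "e \<ge> 1"
  shows "A \<in> Geen e n \<longleftrightarrow> (\<exists>\<sigma> c. valid e n \<sigma> c \<and> A = mat n \<sigma> c)"
proof
  assume "A \<in> Geen e n"
  then obtain \<sigma> where z: "\<forall>i j. (i \<notin> {1..n} \<or> j \<notin> {1..n}) \<longrightarrow> A i j = 0"
    and b: "bij_betw \<sigma> {1..n} {1..n}"
    and nz: "\<forall>i\<in>{1..n}. \<forall>j\<in>{1..n}. A i j \<noteq> 0 \<longleftrightarrow> j = \<sigma> i"
    and r: "\<forall>i\<in>{1..n}. (A i (\<sigma> i)) ^ e = 1"
    and p: "(\<Prod>i\<in>{1..n}. A i (\<sigma> i)) = 1"
    unfolding Geen_def by blast
  have "A = mat n \<sigma> (\<lambda>i. A i (\<sigma> i))"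
  proof (rule ext, rule ext)
    fix i j show "A i j = mat n \<sigma> (\<lambda>i. A i (\<sigma> i)) i j"
    proof (cases "i \<in> {1..n} \<and> j \<in> {1..n}")
      case True
      then have "A i j \<noteq> 0 \<longleftrightarrow> j = \<sigma> i" using nz by blast
      then show ?thesis using True by (auto simp: mat_def)
    next
      case False then show ?thesis using z by (auto simp: mat_def)
    qed
  qed
  moreover have "valid e n \<sigma> (\<lambda>i. A i (\<sigma> i))" using b r p by (simp add: valid_def)
  ultimately show "\<exists>\<sigma> c. valid e n \<sigma> c \<and> A = mat n \<sigma> c" by blast
next
  assume "\<exists>\<sigma> c. valid e n \<sigma> c \<and> A = mat n \<sigma> c"
  then obtain \<sigma> c where v: "valid e n \<sigma> c" and A: "A = mat n \<sigma> c" by blast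
  have rg: "\<forall>i\<in>{1..n}. \<sigma> i \<in> {1..n}" using valid_range[OF v] .
  have nz: "\<And>i. i \<in> {1..n} \<Longrightarrow> c i \<noteq> 0" using valid_nz[OF v assms] by blast
  show "A \<in> Geen e n" unfolding Geen_def
  proof (intro CollectI conjI allI impI exI[of _ \<sigma>])
    show "\<And>i j. i \<notin> {1..n} \<or> j \<notin> {1..n} \<Longrightarrow> A i j = 0" by (auto simp: A mat_def)
    show "bij_betw \<sigma> {1..n} {1..n}" using v by (simp add: valid_def)
    show "\<forall>i\<in>{1..n}. \<forall>j\<in>{1..n}. (A i j \<noteq> 0) = (j = \<sigma> i)" using nz by (auto simp: A mat_def)
    show "\<forall>i\<in>{1..n}. A i (\<sigma> i) ^ e = 1" using v rg by (auto simp: A mat_def valid_def)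
    have "(\<Prod>i\<in>{1..n}. A i (\<sigma> i)) = (\<Prod>i\<in>{1..n}. c i)"
      using rg by (auto simp: A mat_def intro!: prod.cong)
    then show "(\<Prod>i\<in>{1..n}. A i (\<sigma> i)) = 1" using v by (simp add: valid_def)
  qed
qed


lemma valid_mult:
  assumes "valid e n \<sigma> c" "valid e n \<tau> d"
  shows "valid e n (\<tau> \<circ> \<sigma>) (\<lambda>i. c i * d (\<sigma> i))"
proof -
  have b1: "bij_betw \<sigma> {1..n} {1..n}" and b2: "bij_betw \<tau> {1..n} {1..n}"
    using assms by (auto simp: valid_def)
  have "bij_betw (\<tau> \<circ> \<sigma>) {1..n} {1..n}" using bij_betw_trans[OF b1 b2] .
  moreover have "\<forall>i\<in>{1..n}. (c i * d (\<sigma> i)) ^ e = 1"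
    using assms valid_range[OF assms(1)] by (auto simp: valid_def power_mult_distrib)
  moreover have "(\<Prod>i\<in>{1..n}. c i * d (\<sigma> i)) = 1"
  proof -
    have "(\<Prod>i\<in>{1..n}. d (\<sigma> i)) = (\<Prod>i\<in>{1..n}. d i)"
      using prod.reindex_bij_betw[OF b1, of d] by simp
    then show ?thesis using assms by (simp add: prod.distrib valid_def)
  qed
  ultimately show ?thesis by (simp add: valid_def)
qed

definition sw :: "nat \<Rightarrow> nat \<Rightarrow> nat" where
  "sw a i = (if i = a then Suc a else if i = Suc a then a else i)"

lemma sw_sw[simp]: "sw a (sw a i) = i"
  by (auto simp: sw_def)

lemma sw_bij:
  assumes "1 \<le> a" "Suc a \<le> n"
  shows "bij_betw (sw a) {1..n} {1..n}"
  by (rule bij_betw_byWitness[where f'="sw a"]) (use assms in \<open>auto simp: sw_def\<close>)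

lemma zeta_nz[simp]: "zeta e \<noteq> 0"
  by (simp add: zeta_def)

lemma zeta_pow_e: "e \<ge> 1 \<Longrightarrow> zeta e ^ e = 1"
  by (simp add: zeta_def DeMoivre)

lemma prod_two:
  assumes "1 \<le> (a::nat)" "a \<le> n" "1 \<le> b" "b \<le> n" "a \<noteq> b"
  shows "(\<Prod>i\<in>{1..n}. (if i = a then x else 1) * (if i = b then y else (1::complex))) = x * y"
  using assms apply (simp only: prod.distrib)
  apply (subst prod.delta, simp)+
  apply simp
  done

definition tr :: "nat \<Rightarrow> nat \<Rightarrow> nat \<Rightarrow> complex" where
  "tr e k i = (if i = 1 then inverse (zeta e ^ k) else 1) * (if i = 2 then zeta e ^ k else 1)"

lemma gen_t_mat:
  assumes "n \<ge> 2"
  shows "gen_t e n k = mat n (sw 1) (tr e k)"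
  using assms by (auto simp: gen_t_def mat_def sw_def tr_def fun_eq_iff)

lemma gen_s_mat:
  assumes "3 \<le> j" "j \<le> n"
  shows "gen_s n j = mat n (sw (j - 1)) (\<lambda>_. 1)"
  using assms by (auto simp: gen_s_def mat_def sw_def fun_eq_iff)

definition gcond :: "nat \<Rightarrow> nat \<Rightarrow> nat \<Rightarrow> (nat \<Rightarrow> complex) \<Rightarrow> bool" where
  "gcond e n a r \<longleftrightarrow> 1 \<le> a \<and> Suc a \<le> n \<and> valid e n (sw a) r
     \<and> (\<forall>b. 2 \<le> b \<longrightarrow> b \<le> n \<longrightarrow> b \<noteq> Suc a \<longrightarrow> r b = 1)
     \<and> (a \<noteq> 1 \<longrightarrow> r (Suc a) = 1) \<and> (\<forall>i\<in>{1..n}. r i * r (sw a i) = 1)"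

lemma gcond_t:
  assumes e: "e \<ge> 2" and n: "n \<ge> 2" and k: "k < e"
  shows "gcond e n 1 (tr e k)"
proof -
  have v: "valid e n (sw 1) (tr e k)"
    unfolding valid_def
  proof (intro conjI)
    show "bij_betw (sw 1) {1..n} {1..n}" using sw_bij[of 1 n] n by simp
    have "(zeta e ^ k) ^ e = 1" using zeta_pow_e[of e] e
      by (metis (no_types) one_le_numeral order_trans power_mult power_mult_distrib mult.commute power_one)
    then show "\<forall>i\<in>{1..n}. tr e k i ^ e = 1"
      by (auto simp: tr_def power_mult_distrib power_inverse)
    show "prod (tr e k) {1..n} = 1" unfolding tr_def using n
      by (subst prod_two) auto
  qed
  show ?thesis unfolding gcond_def
    using v n by (auto simp: tr_def sw_def)
qed

lemma gcond_s:
  assumes "3 \<le> j" "j \<le> n"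
  shows "gcond e n (j - 1) (\<lambda>_. 1)"
proof -
  have v: "valid e n (sw (j-1)) (\<lambda>_. 1)"
    unfolding valid_def using sw_bij[of "j-1" n] assms by auto
  show ?thesis unfolding gcond_def using v assms by auto
qed

lemma gens_cond:
  assumes "e \<ge> 2" "n \<ge> 2" "x \<in> gens e n"
  shows "\<exists>a r. x = mat n (sw a) r \<and> gcond e n a r"
proof -
  consider (t) k where "k < e" "x = gen_t e n k" | (s) j where "3 \<le> j" "j \<le> n" "x = gen_s n j"
    using assms(3) unfolding gens_def by blast
  then show ?thesis
  proof cases
    case t
    then show ?thesis using gen_t_mat[OF assms(2)] gcond_t[OF assms(1,2)] by blast
  next
    case s
    then show ?thesis using gen_s_mat gcond_s by blast
  qed
qed

definition Pairs :: "nat \<Rightarrow> (nat \<times> nat) set" where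
  "Pairs n = {(a, b). 1 \<le> a \<and> a < b \<and> b \<le> n}"

lemma finite_Pairs[simp]: "finite (Pairs n)"
  by (rule finite_subset[of _ "{1..n} \<times> {1..n}"]) (auto simp: Pairs_def)

definition pc :: "(nat \<Rightarrow> nat) \<Rightarrow> (nat \<Rightarrow> complex) \<Rightarrow> nat \<Rightarrow> nat \<Rightarrow> nat" where
  "pc \<sigma> c a b = (if \<sigma> b < \<sigma> a then 1 else if c b = 1 then 0 else 2)"

definition fl :: "nat \<Rightarrow> (nat \<Rightarrow> nat) \<Rightarrow> (nat \<Rightarrow> complex) \<Rightarrow> nat" where
  "fl n \<sigma> c = (\<Sum>p\<in>Pairs n. pc \<sigma> c (fst p) (snd p))"

lemma fl_cong:
  assumes "\<forall>i\<in>{1..n}. \<sigma> i = \<sigma>' i \<and> c i = c' i"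
  shows "fl n \<sigma> c = fl n \<sigma>' c'"
  unfolding fl_def
  by (rule sum.cong) (use assms in \<open>auto simp: Pairs_def pc_def\<close>)

definition F :: "nat \<Rightarrow> nat \<Rightarrow> cmat \<Rightarrow> nat" where
  "F e n A = (SOME k. \<exists>\<sigma> c. valid e n \<sigma> c \<and> A = mat n \<sigma> c \<and> k = fl n \<sigma> c)"

lemma F_mat:
  assumes "e \<ge> 1" "valid e n \<sigma> c"
  shows "F e n (mat n \<sigma> c) = fl n \<sigma> c"
proof -
  have ex: "\<exists>k. \<exists>\<sigma>' c'. valid e n \<sigma>' c' \<and> mat n \<sigma> c = mat n \<sigma>' c' \<and> k = fl n \<sigma>' c'"
    using assms by blast
  have "\<exists>\<sigma>' c'. valid e n \<sigma>' c' \<and> mat n \<sigma> c = mat n \<sigma>' c' \<and> F e n (mat n \<sigma> c) = fl n \<sigma>' c'"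
    unfolding F_def by (rule someI_ex[OF ex])
  then obtain \<sigma>' c' where "mat n \<sigma> c = mat n \<sigma>' c'" "F e n (mat n \<sigma> c) = fl n \<sigma>' c'" by blast
  moreover have "\<forall>i\<in>{1..n}. \<sigma> i = \<sigma>' i \<and> c i = c' i"
    by (rule mat_inj) (use valid_range[OF assms(2)] valid_nz[OF assms(2) assms(1)] calculation in auto)
  ultimately show ?thesis using fl_cong by metis
qed


lemma Pairs_mem: "p \<in> Pairs n \<longleftrightarrow> 1 \<le> fst p \<and> fst p < snd p \<and> snd p \<le> n"
  by (cases p) (auto simp: Pairs_def)

lemma fl_switch:
  assumes gc: "gcond e n a r"
  shows "fl n (\<sigma> \<circ> sw a) (\<lambda>i. r i * c (sw a i)) + pc \<sigma> c a (Suc a)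
       = fl n \<sigma> c + pc (\<sigma> \<circ> sw a) (\<lambda>i. r i * c (sw a i)) a (Suc a)"
proof -
  have a1: "1 \<le> a" and a2: "Suc a \<le> n"
    and hr: "\<forall>b. 2 \<le> b \<longrightarrow> b \<le> n \<longrightarrow> b \<noteq> Suc a \<longrightarrow> r b = 1"
    and hr2: "a \<noteq> 1 \<longrightarrow> r (Suc a) = 1"
    using gc by (auto simp: gcond_def)
  define c' where "c' = (\<lambda>i. r i * c (sw a i))"
  define Q where "Q = Pairs n - {(a, Suc a)}"
  have mem: "(a, Suc a) \<in> Pairs n" using a1 a2 by (simp add: Pairs_def)
  have split: "\<And>g. (\<Sum>p\<in>Pairs n. g p) = g (a, Suc a) + (\<Sum>p\<in>Q. g p)"
    unfolding Q_def using mem by (simp add: sum.remove)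
  define sp where "sp = (\<lambda>p::nat\<times>nat. (sw a (fst p), sw a (snd p)))"
  have spQ: "\<And>p. p \<in> Q \<Longrightarrow> sp p \<in> Q"
    unfolding Q_def sp_def using a1 a2 by (case_tac p) (simp add: Pairs_def sw_def, blast)
  have spsp: "\<And>p. sp (sp p) = p" by (simp add: sp_def)
  have "(\<Sum>p\<in>Q. pc (\<sigma> \<circ> sw a) c' (fst p) (snd p)) = (\<Sum>p\<in>Q. pc \<sigma> c (fst (sp p)) (snd (sp p)))"
  proof (rule sum.cong)
    fix p assume p: "p \<in> Q"
    have "r (snd p) = 1"
    proof (cases "snd p = Suc a")
      case True
      then have "fst p \<noteq> a" "1 \<le> fst p" "fst p < Suc a" using p by (cases p, auto simp: Pairs_def Q_def)+
      then have "a \<noteq> 1" by auto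
      then show ?thesis using hr2 True by simp
    next
      case False
      have "2 \<le> snd p" "snd p \<le> n" using p by (cases p, auto simp: Pairs_def Q_def)+
      then show ?thesis using hr False by blast
    qed
    then show "pc (\<sigma> \<circ> sw a) c' (fst p) (snd p) = pc \<sigma> c (fst (sp p)) (snd (sp p))"
      by (simp add: pc_def c'_def sp_def)
  qed simp
  also have "\<dots> = (\<Sum>p\<in>Q. pc \<sigma> c (fst p) (snd p))"
    by (rule sum.reindex_bij_witness[where i=sp and j=sp]) (auto simp: spsp spQ)
  finally have "(\<Sum>p\<in>Q. pc (\<sigma> \<circ> sw a) c' (fst p) (snd p)) = (\<Sum>p\<in>Q. pc \<sigma> c (fst p) (snd p))" .
  then show ?thesis unfolding fl_def c'_def[symmetric] by (simp add: split)
qed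

lemma pc_switched:
  "pc (\<sigma> \<circ> sw a) (\<lambda>i. r i * c (sw a i)) a (Suc a)
     = (if \<sigma> a < \<sigma> (Suc a) then 1 else if r (Suc a) * c a = 1 then 0 else 2)"
  by (simp add: pc_def sw_def)

lemma gen_step:
  assumes e: "e \<ge> 2" and n: "n \<ge> 2" and x: "x \<in> gens e n" and A: "A \<in> Geen e n"
  shows "mmult n x A \<in> Geen e n \<and> F e n (mmult n x A) \<le> F e n A + 1
       \<and> F e n A \<le> F e n (mmult n x A) + 1 \<and> mmult n x x = mone n"
proof -
  have e1: "e \<ge> 1" using e by simp
  obtain a r where xr: "x = mat n (sw a) r" and gc: "gcond e n a r"
    using gens_cond[OF e n x] by blast
  obtain \<sigma> c where v: "valid e n \<sigma> c" and Am: "A = mat n \<sigma> c"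
    using A Geen_iff[OF e1] by blast
  have a1: "1 \<le> a" and a2: "Suc a \<le> n" and vr: "valid e n (sw a) r"
    and rinv: "\<forall>i\<in>{1..n}. r i * r (sw a i) = 1"
    using gc by (auto simp: gcond_def)
  have rg: "\<forall>i\<in>{1..n}. sw a i \<in> {1..n}" using valid_range[OF vr] .
  have prod: "mmult n x A = mat n (\<sigma> \<circ> sw a) (\<lambda>i. r i * c (sw a i))"
    unfolding xr Am by (rule mat_mult[OF rg])
  have v2: "valid e n (\<sigma> \<circ> sw a) (\<lambda>i. r i * c (sw a i))" by (rule valid_mult[OF vr v])
  have G: "mmult n x A \<in> Geen e n" using prod v2 Geen_iff[OF e1] by blast
  have eq: "F e n (mmult n x A) + pc \<sigma> c a (Suc a)
       = F e n A + pc (\<sigma> \<circ> sw a) (\<lambda>i. r i * c (sw a i)) a (Suc a)"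
    using fl_switch[OF gc, of \<sigma> c] F_mat[OF e1 v] F_mat[OF e1 v2] prod Am by simp
  have ne: "\<sigma> a \<noteq> \<sigma> (Suc a)"
  proof
    assume "\<sigma> a = \<sigma> (Suc a)"
    moreover have "inj_on \<sigma> {1..n}" using v by (simp add: valid_def bij_betw_def)
    ultimately show False using a1 a2 by (auto dest: inj_onD)
  qed
  have bounds: "F e n (mmult n x A) \<le> F e n A + 1 \<and> F e n A \<le> F e n (mmult n x A) + 1"
    using eq ne unfolding pc_switched by (auto simp: pc_def split: if_splits)
  have "mmult n x x = mat n (sw a \<circ> sw a) (\<lambda>i. r i * r (sw a i))"
    unfolding xr by (rule mat_mult[OF rg])
  also have "\<dots> = mat n id (\<lambda>_. 1)" by (rule mat_cong) (use rinv in auto)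
  finally have "mmult n x x = mone n" by (simp add: mone_mat)
  with G bounds show ?thesis by simp
qed


lemma zeta_pow_cis: "zeta e ^ k = cis (2 * pi * real k / real e)"
proof -
  have "real k * (2 * pi / real e) = 2 * pi * real k / real e" by simp
  then show ?thesis by (simp add: zeta_def DeMoivre mult_ac)
qed

lemma root_is_zeta_pow:
  assumes "e \<ge> 1" "z ^ e = 1"
  shows "\<exists>k<e. z = zeta e ^ k"
proof -
  have "z \<in> {z. z ^ e = 1}" using assms by simp
  then have "z \<in> (\<lambda>k. cis (2 * pi * real k / real e)) ` {..<e}"
    using bij_betw_roots_unity[of e] assms by (simp add: bij_betw_def)
  then show ?thesis by (auto simp: zeta_pow_cis)
qed

lemma zeta_pow_ne1:
  assumes "0 < k" "k < e"
  shows "zeta e ^ k \<noteq> 1"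
proof
  assume h: "zeta e ^ k = 1"
  have inj: "inj_on (\<lambda>k. cis (2 * pi * real k / real e)) {..<e}"
    using bij_betw_roots_unity[of e] assms by (simp add: bij_betw_def)
  have "cis (2 * pi * real k / real e) = cis (2 * pi * real 0 / real e)"
    using h by (simp add: zeta_pow_cis)
  then have "k = 0" using inj_onD[OF inj] assms by auto
  then show False using assms by simp
qed

lemma zeta_pow_root: "e \<ge> 1 \<Longrightarrow> (zeta e ^ k) ^ e = 1"
  by (metis power_mult mult.commute power_one zeta_pow_e)

lemma mono_id:
  assumes b: "bij_betw \<sigma> {1..n} {1..(n::nat)}"
    and inc: "\<forall>m. 2 \<le> m \<longrightarrow> m \<le> n \<longrightarrow> \<sigma> (m - 1) < \<sigma> m"
  shows "\<forall>i\<in>{1..n}. \<sigma> i = i"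
proof -
  have rg: "\<And>i. i \<in> {1..n} \<Longrightarrow> \<sigma> i \<in> {1..n}" using b by (auto simp: bij_betw_def)
  have ge: "\<And>i. 1 \<le> i \<Longrightarrow> i \<le> n \<Longrightarrow> i \<le> \<sigma> i"
  proof -
    fix i :: nat assume "1 \<le> i" "i \<le> n"
    then show "i \<le> \<sigma> i"
    proof (induction i rule: nat_induct_at_least)
      case base then show ?case using rg[of 1] by auto
    next
      case (Suc m)
      have "\<sigma> m < \<sigma> (Suc m)" using inc[rule_format, of "Suc m"] Suc by auto
      then show ?case using Suc by auto
    qed
  qed
  have le: "\<And>d. d < n \<Longrightarrow> \<sigma> (n - d) \<le> n - d"
  proof -
    fix d assume "d < n"
    then show "\<sigma> (n - d) \<le> n - d"
    proof (induction d)
      case 0 then show ?case using rg[of n] by auto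
    next
      case (Suc d)
      have "\<sigma> (n - Suc d) < \<sigma> (n - d)"
        using inc[rule_format, of "n - d"] Suc.prems by (auto simp: Suc_diff_Suc)
      then show ?case using Suc by auto
    qed
  qed
  show ?thesis
  proof
    fix i assume i: "i \<in> {1..n}"
    have "\<sigma> (n - (n - i)) \<le> n - (n - i)" using le[of "n - i"] i by auto
    then have "\<sigma> i \<le> i" using i by auto
    then show "\<sigma> i = i" using ge[of i] i by auto
  qed
qed

lemma valid_id: "valid e n id (\<lambda>_. 1)"
  by (simp add: valid_def)

lemma fl_id: "fl n id (\<lambda>_. 1) = 0"
  by (auto simp: fl_def pc_def Pairs_def intro!: sum.neutral)

lemma F_mone: "e \<ge> 1 \<Longrightarrow> F e n (mone n) = 0"
  by (simp add: mone_mat F_mat[OF _ valid_id] fl_id)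

lemma descent:
  assumes e: "e \<ge> 2" and n: "n \<ge> 2" and A: "A \<in> Geen e n" and ne: "A \<noteq> mone n"
  shows "\<exists>x\<in>gens e n. F e n (mmult n x A) < F e n A"
proof (rule ccontr)
  assume "\<not> ?thesis"
  then have nd: "\<And>x. x \<in> gens e n \<Longrightarrow> F e n A \<le> F e n (mmult n x A)" by force
  have e1: "e \<ge> 1" using e by simp
  obtain \<sigma> c where v: "valid e n \<sigma> c" and Am: "A = mat n \<sigma> c"
    using A Geen_iff[OF e1] by blast
  have inj: "inj_on \<sigma> {1..n}" using v by (simp add: valid_def bij_betw_def)
  have key: "\<And>a r. gcond e n a r \<Longrightarrow> mat n (sw a) r \<in> gens e n \<Longrightarrow>
     pc \<sigma> c a (Suc a) \<le> (if \<sigma> a < \<sigma> (Suc a) then 1 else if r (Suc a) * c a = 1 then 0 else 2)"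
  proof -
    fix a r assume gc: "gcond e n a r" and xg: "mat n (sw a) r \<in> gens e n"
    have vr: "valid e n (sw a) r" using gc by (simp add: gcond_def)
    have prod: "mmult n (mat n (sw a) r) A = mat n (\<sigma> \<circ> sw a) (\<lambda>i. r i * c (sw a i))"
      unfolding Am by (rule mat_mult[OF valid_range[OF vr]])
    have v2: "valid e n (\<sigma> \<circ> sw a) (\<lambda>i. r i * c (sw a i))" by (rule valid_mult[OF vr v])
    have eq: "F e n (mmult n (mat n (sw a) r) A) + pc \<sigma> c a (Suc a)
       = F e n A + pc (\<sigma> \<circ> sw a) (\<lambda>i. r i * c (sw a i)) a (Suc a)"
      using fl_switch[OF gc, of \<sigma> c] F_mat[OF e1 v] F_mat[OF e1 v2] prod Am by simp
    show "pc \<sigma> c a (Suc a) \<le> (if \<sigma> a < \<sigma> (Suc a) then 1 else if r (Suc a) * c a = 1 then 0 else 2)"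
      using eq nd[OF xg] unfolding pc_switched by linarith
  qed
  have t1: "\<sigma> 1 < \<sigma> 2"
  proof (rule ccontr)
    assume "\<not> \<sigma> 1 < \<sigma> 2"
    moreover have "\<sigma> 1 \<noteq> \<sigma> 2" using inj_onD[OF inj, of 1 2] n by auto
    ultimately have lt: "\<sigma> 2 < \<sigma> 1" by simp
    have "inverse (c 1) ^ e = 1" using v n by (simp add: valid_def power_inverse)
    then obtain k where k: "k < e" "inverse (c 1) = zeta e ^ k" using root_is_zeta_pow e1 by blast
    have c1: "c 1 \<noteq> 0" using valid_nz[OF v e1, of 1] n by simp
    have "tr e k 2 * c 1 = inverse (c 1) * c 1" using k by (simp add: tr_def)
    then have "tr e k 2 * c 1 = 1" using c1 by simp
    moreover have "gen_t e n k \<in> gens e n" using k by (auto simp: gens_def)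
    ultimately show False
      using key[OF gcond_t[OF e n k(1)], unfolded Suc_1] gen_t_mat[OF n, of e k] lt
      by (auto simp: pc_def)
  qed
  have "gen_t e n 0 \<in> gens e n" using e by (auto simp: gens_def)
  then have c2: "c 2 = 1"
    using key[OF gcond_t[OF e n, of 0], unfolded Suc_1] gen_t_mat[OF n, of e 0] e t1
    by (auto simp: pc_def split: if_splits)
  have claim: "\<And>m. 2 \<le> m \<Longrightarrow> m \<le> n \<Longrightarrow> \<sigma> (m - 1) < \<sigma> m \<and> c m = 1"
  proof -
    fix m :: nat assume "2 \<le> m" "m \<le> n"
    then show "\<sigma> (m - 1) < \<sigma> m \<and> c m = 1"
    proof (induction m rule: nat_induct_at_least)
      case base then show ?case using t1 c2 by simp
    next
      case (Suc m)
      have gs: "gen_s n (Suc m) \<in> gens e n" using Suc by (auto simp: gens_def)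
      have gc: "gcond e n m (\<lambda>_. 1)" using gcond_s[of "Suc m" n] Suc by simp
      have kk: "pc \<sigma> c m (Suc m) \<le> (if \<sigma> m < \<sigma> (Suc m) then 1 else if c m = 1 then 0 else 2)"
      proof -
        have "mat n (sw m) (\<lambda>_. 1) \<in> gens e n" using gs gen_s_mat[of "Suc m" n] Suc by simp
        from key[OF gc this] show ?thesis by (cases "\<sigma> m < \<sigma> (Suc m)") auto
      qed
      have cm: "c m = 1" using Suc by simp
      have neq: "\<sigma> m \<noteq> \<sigma> (Suc m)" using inj_onD[OF inj, of m "Suc m"] Suc by auto
      show ?case using kk cm neq by (cases "\<sigma> m < \<sigma> (Suc m)") (auto simp: pc_def split: if_splits)
    qed
  qed
  have sid: "\<forall>i\<in>{1..n}. \<sigma> i = i"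
    by (rule mono_id) (use v claim in \<open>auto simp: valid_def\<close>)
  have cs: "\<And>i. 2 \<le> i \<Longrightarrow> i \<le> n \<Longrightarrow> c i = 1" using claim by blast
  have "(\<Prod>i\<in>{1..n}. c i) = c 1 * (\<Prod>i\<in>{2..n}. c i)"
    using n by (simp add: prod.atLeast_Suc_atMost numeral_2_eq_2)
  also have "(\<Prod>i\<in>{2..n}. c i) = 1" using cs by simp
  finally have c1: "c 1 = 1" using v by (simp add: valid_def)
  have "A = mat n id (\<lambda>_. 1)"
  proof -
    have "\<forall>i\<in>{1..n}. \<sigma> i = id i \<and> c i = 1"
    proof
      fix i assume i: "i \<in> {1..n}"
      show "\<sigma> i = id i \<and> c i = 1"
      proof (cases "i = 1")
        case True then show ?thesis using sid i c1 by simp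
      next
        case False then show ?thesis using sid i cs[of i] by simp
      qed
    qed
    then show ?thesis unfolding Am by (rule mat_cong)
  qed
  then show False using ne by (simp add: mone_mat)
qed


lemma wprod_Cons: "wprod n (x # ws) = mmult n x (wprod n ws)"
  by (simp add: wprod_def)

lemma mone_Geen: "e \<ge> 1 \<Longrightarrow> mone n \<in> Geen e n"
  using Geen_iff[of e "mone n" n] valid_id mone_mat by blast

lemma word_bound:
  assumes e: "e \<ge> 2" and n: "n \<ge> 2"
  shows "set ws \<subseteq> gens e n \<Longrightarrow> wprod n ws \<in> Geen e n \<and> F e n (wprod n ws) \<le> length ws"
proof (induction ws)
  case Nil
  then show ?case using mone_Geen[of e n] F_mone[of e n] e by (simp add: wprod_def)
next
  case (Cons x ws)
  then have x: "x \<in> gens e n" and IH: "wprod n ws \<in> Geen e n \<and> F e n (wprod n ws) \<le> length ws" by auto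
  show ?case using gen_step[OF e n x, of "wprod n ws"] IH by (simp add: wprod_Cons)
qed

lemma word_exists:
  assumes e: "e \<ge> 2" and n: "n \<ge> 2"
  shows "A \<in> Geen e n \<Longrightarrow> \<exists>ws. set ws \<subseteq> gens e n \<and> length ws = F e n A \<and> wprod n ws = A"
proof (induction "F e n A" arbitrary: A rule: less_induct)
  case less
  show ?case
  proof (cases "A = mone n")
    case True
    then show ?thesis using F_mone[of e n] e by (intro exI[of _ "[]"]) (simp add: wprod_def)
  next
    case False
    obtain x where x: "x \<in> gens e n" and lt: "F e n (mmult n x A) < F e n A"
      using descent[OF e n less.prems False] by blast
    have st: "mmult n x A \<in> Geen e n \<and> F e n (mmult n x A) \<le> F e n A + 1
       \<and> F e n A \<le> F e n (mmult n x A) + 1 \<and> mmult n x x = mone n"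
      using gen_step[OF e n x less.prems] .
    obtain ws where ws: "set ws \<subseteq> gens e n" "length ws = F e n (mmult n x A)"
      "wprod n ws = mmult n x A"
      using less.hyps[OF lt] st by blast
    obtain \<sigma> c where v: "valid e n \<sigma> c" and Am: "A = mat n \<sigma> c"
      using less.prems Geen_iff[of e] e by auto
    have "wprod n (x # ws) = mmult n (mmult n x x) A"
      by (simp add: wprod_Cons ws(3) mmult_assoc)
    also have "\<dots> = A" using st Am by (simp add: mone_mat mat_mult)
    finally show ?thesis using ws x lt st by (intro exI[of _ "x # ws"]) auto
  qed
qed

lemma wlen_F:
  assumes e: "e \<ge> 2" and n: "n \<ge> 2" and A: "A \<in> Geen e n"
  shows "wlen e n A = F e n A"
  unfolding wlen_def
proof (rule Least_equality)
  show "\<exists>ws. set ws \<subseteq> gens e n \<and> length ws = F e n A \<and> wprod n ws = A"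
    using word_exists[OF e n A] .
next
  fix k assume "\<exists>ws. set ws \<subseteq> gens e n \<and> length ws = k \<and> wprod n ws = A"
  then obtain ws where "set ws \<subseteq> gens e n" "length ws = k" "wprod n ws = A" by blast
  then show "F e n A \<le> k" using word_bound[OF e n] by blast
qed

lemma wlen_mat:
  assumes e: "e \<ge> 2" and n: "n \<ge> 2" and v: "valid e n \<sigma> c"
  shows "wlen e n (mat n \<sigma> c) = fl n \<sigma> c"
proof -
  have "mat n \<sigma> c \<in> Geen e n" using v Geen_iff[of e] e by auto
  then show ?thesis using wlen_F[OF e n] F_mat[OF _ v] e by simp
qed

lemma mone_left: "e \<ge> 1 \<Longrightarrow> B \<in> Geen e n \<Longrightarrow> mmult n (mone n) B = B"
  using Geen_iff[of e B n] by (auto simp: mone_mat mat_mult)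

lemma mone_right: "e \<ge> 1 \<Longrightarrow> B \<in> Geen e n \<Longrightarrow> mmult n B (mone n) = B"
  using Geen_iff[of e B n] by (auto simp: mone_mat mat_mult dest!: valid_range)

lemma inv_exists:
  assumes e: "e \<ge> 1" and A: "A \<in> Geen e n"
  shows "\<exists>B\<in>Geen e n. mmult n A B = mone n \<and> mmult n B A = mone n"
proof -
  obtain \<sigma> c where v: "valid e n \<sigma> c" and Am: "A = mat n \<sigma> c"
    using A Geen_iff[OF e] by blast
  have b: "bij_betw \<sigma> {1..n} {1..n}" using v by (simp add: valid_def)
  define \<sigma>' where "\<sigma>' = inv_into {1..n} \<sigma>"
  have b': "bij_betw \<sigma>' {1..n} {1..n}" unfolding \<sigma>'_def by (rule bij_betw_inv_into[OF b])
  have l: "\<And>i. i \<in> {1..n} \<Longrightarrow> \<sigma>' (\<sigma> i) = i" unfolding \<sigma>'_def using bij_betw_inv_into_left[OF b] by blast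
  have r: "\<And>i. i \<in> {1..n} \<Longrightarrow> \<sigma> (\<sigma>' i) = i" unfolding \<sigma>'_def using bij_betw_inv_into_right[OF b] by blast
  have rg': "\<And>i. i \<in> {1..n} \<Longrightarrow> \<sigma>' i \<in> {1..n}" using b' by (auto simp: bij_betw_def)
  have nz: "\<And>i. i \<in> {1..n} \<Longrightarrow> c i \<noteq> 0" using valid_nz[OF v e] by blast
  define d where "d = (\<lambda>i. inverse (c (\<sigma>' i)))"
  have vB: "valid e n \<sigma>' d"
    unfolding valid_def
  proof (intro conjI)
    show "bij_betw \<sigma>' {1..n} {1..n}" by (rule b')
    show "\<forall>i\<in>{1..n}. d i ^ e = 1" using v rg' by (auto simp: d_def valid_def power_inverse)
    have "(\<Prod>i\<in>{1..n}. c (\<sigma>' i)) = (\<Prod>i\<in>{1..n}. c i)"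
      using prod.reindex_bij_betw[OF b', of c] by simp
    then have "(\<Prod>i\<in>{1..n}. d i) = inverse (\<Prod>i\<in>{1..n}. c i)"
      using prod_inversef[of "\<lambda>i. c (\<sigma>' i)" "{1..n}"] by (simp add: d_def o_def)
    then show "prod d {1..n} = 1" using v by (simp add: valid_def)
  qed
  have "mmult n A (mat n \<sigma>' d) = mat n (\<sigma>' \<circ> \<sigma>) (\<lambda>i. c i * d (\<sigma> i))"
    unfolding Am by (rule mat_mult[OF valid_range[OF v]])
  also have "\<dots> = mat n id (\<lambda>_. 1)" by (rule mat_cong) (auto simp: l d_def nz)
  finally have 1: "mmult n A (mat n \<sigma>' d) = mone n" by (simp add: mone_mat)
  have "mmult n (mat n \<sigma>' d) A = mat n (\<sigma> \<circ> \<sigma>') (\<lambda>i. d i * c (\<sigma>' i))"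
    unfolding Am by (rule mat_mult[OF valid_range[OF vB]])
  also have "\<dots> = mat n id (\<lambda>_. 1)"
  proof -
    have "\<forall>i\<in>{1..n}. c (\<sigma>' i) \<noteq> 0" using nz rg' by blast
    then show ?thesis by (intro mat_cong) (auto simp: r d_def rg')
  qed
  finally have 2: "mmult n (mat n \<sigma>' d) A = mone n" by (simp add: mone_mat)
  have "mat n \<sigma>' d \<in> Geen e n" using vB Geen_iff[OF e] by blast
  then show ?thesis using 1 2 by blast
qed

lemma ginv_eq:
  assumes e: "e \<ge> 1" and A: "A \<in> Geen e n" and B: "B \<in> Geen e n" and AB: "mmult n A B = mone n"
  shows "ginv e n A = B"
  unfolding ginv_def
proof (rule the_equality)
  show "B \<in> Geen e n \<and> mmult n A B = mone n" using B AB by simp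
next
  fix B' assume h: "B' \<in> Geen e n \<and> mmult n A B' = mone n"
  obtain C where C: "C \<in> Geen e n" "mmult n C A = mone n" using inv_exists[OF e A] by blast
  have gen: "\<And>X. X \<in> Geen e n \<Longrightarrow> mmult n A X = mone n \<Longrightarrow> X = C"
  proof -
    fix X assume X: "X \<in> Geen e n" "mmult n A X = mone n"
    have "X = mmult n (mmult n C A) X" using mone_left[OF e X(1)] C by simp
    also have "\<dots> = C" using X mone_right[OF e C(1)] by (simp add: mmult_assoc)
    finally show "X = C" .
  qed
  show "B' = B" using gen[of B'] gen[OF B AB] h by simp
qed

lemma ginv_Geen:
  assumes e: "e \<ge> 1" and A: "A \<in> Geen e n"
  shows "ginv e n A \<in> Geen e n"
  using inv_exists[OF e A] ginv_eq[OF e A] by metis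


lemma valid_cong:
  assumes "valid e n \<sigma> c" "\<forall>i\<in>{1..n}. \<sigma> i = \<sigma>' i \<and> c i = c' i"
  shows "valid e n \<sigma>' c'"
proof -
  have "bij_betw \<sigma>' {1..n} {1..n}"
    using assms bij_betw_cong[of "{1..n}" \<sigma> \<sigma>'] by (auto simp: valid_def)
  moreover have "(\<Prod>i\<in>{1..n}. c' i) = (\<Prod>i\<in>{1..n}. c i)" using assms(2) by (auto intro!: prod.cong)
  ultimately show ?thesis using assms by (auto simp: valid_def)
qed

definition Dk :: "nat \<Rightarrow> nat \<Rightarrow> nat \<Rightarrow> nat \<Rightarrow> complex" where
  "Dk e n k i = (if i = 1 then inverse (zeta e ^ (n - 1)) ^ k else zeta e ^ k)"

lemma lam_mat: "n \<ge> 1 \<Longrightarrow> lam e n = mat n id (Dk e n 1)"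
  by (auto simp: lam_def mat_def Dk_def fun_eq_iff)

lemma mpow_lam: "n \<ge> 1 \<Longrightarrow> mpow n (lam e n) k = mat n id (Dk e n k)"
proof (induction k)
  case 0
  have "Dk e n 0 = (\<lambda>_. 1)" by (simp add: Dk_def fun_eq_iff)
  then show ?case by (simp add: mpow_def mone_mat id_def)
next
  case (Suc k)
  have "mpow n (lam e n) (Suc k) = mmult n (lam e n) (mpow n (lam e n) k)"
    by (simp add: mpow_def)
  also have "\<dots> = mat n id (\<lambda>i. Dk e n 1 i * Dk e n k i)"
    using Suc by (simp add: lam_mat mat_mult id_def comp_def)
  also have "(\<lambda>i. Dk e n 1 i * Dk e n k i) = Dk e n (Suc k)"
    by (auto simp: Dk_def fun_eq_iff)
  finally show ?case .
qed

lemma card_Pairs: "2 * card (Pairs n) = n * (n - 1)"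
proof (induction n)
  case 0
  have "Pairs 0 = {}" by (auto simp: Pairs_def)
  then show ?case by simp
next
  case (Suc n)
  have eq: "Pairs (Suc n) = Pairs n \<union> (\<lambda>a. (a, Suc n)) ` {1..n}"
    by (auto simp: Pairs_def)
  have disj: "Pairs n \<inter> (\<lambda>a. (a, Suc n)) ` {1..n} = {}" by (auto simp: Pairs_def)
  have "card (Pairs (Suc n)) = card (Pairs n) + card ((\<lambda>a. (a, Suc n)) ` {1..n})"
    unfolding eq by (rule card_Un_disjoint) (use disj in auto)
  also have "card ((\<lambda>a. (a, Suc n)) ` {1..n}) = n"
    by (subst card_image) (auto simp: inj_on_def)
  finally show ?case using Suc by (cases n) (auto simp: algebra_simps)
qed

lemma card_snd:
  assumes "b \<le> n"
  shows "card {p \<in> Pairs n. snd p = b} = b - 1"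
proof -
  have "{p \<in> Pairs n. snd p = b} = (\<lambda>a. (a, b)) ` {1..<b}"
    using assms by (auto simp: Pairs_def)
  then show ?thesis by (simp add: card_image inj_on_def)
qed

lemma sum_snd:
  assumes "b \<le> n"
  shows "(\<Sum>p\<in>Pairs n. if snd p = b then (1::nat) else 0) = b - 1"
  using card_snd[OF assms] by (simp add: sum.inter_filter[symmetric])

lemma sum_delta_pair:
  assumes "q \<in> Pairs n"
  shows "(\<Sum>p\<in>Pairs n. if p = q then (1::nat) else 0) = 1"
  using assms by simp


lemma fl_all2:
  assumes "\<forall>p\<in>Pairs n. pc \<sigma> c (fst p) (snd p) = 2"
  shows "fl n \<sigma> c = n * (n - 1)"
proof -
  have "fl n \<sigma> c = (\<Sum>p\<in>Pairs n. 2)" unfolding fl_def using assms by (intro sum.cong) auto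
  also have "\<dots> = 2 * card (Pairs n)" by simp
  finally show ?thesis using card_Pairs by simp
qed

lemma fl_max_all2:
  assumes "fl n \<sigma> c = n * (n - 1)"
  shows "\<forall>p\<in>Pairs n. pc \<sigma> c (fst p) (snd p) = 2"
proof -
  have le: "\<And>p. pc \<sigma> c (fst p) (snd p) \<le> 2" by (simp add: pc_def)
  have "(\<Sum>p\<in>Pairs n. 2 - pc \<sigma> c (fst p) (snd p)) + (\<Sum>p\<in>Pairs n. pc \<sigma> c (fst p) (snd p))
      = (\<Sum>p\<in>Pairs n. (2::nat))"
    by (subst sum.distrib[symmetric]) (rule sum.cong, auto simp: le)
  also have "\<dots> = n * (n - 1)" using card_Pairs[of n] by simp
  finally have "(\<Sum>p\<in>Pairs n. 2 - pc \<sigma> c (fst p) (snd p)) = 0" using assms by (simp add: fl_def)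
  then have "\<forall>p\<in>Pairs n. 2 - pc \<sigma> c (fst p) (snd p) = 0" by simp
  then show ?thesis using le by (metis diff_is_0_eq le_antisym)
qed

lemma mainB:
  assumes e: "e \<ge> 2" and n: "n \<ge> 2" and k: "1 \<le> k" "k \<le> e - 1"
    and gG: "g \<in> Geen e n" and g: "g = mpow n (lam e n) k"
  shows "balanced e n g \<and> wlen e n g = n * (n - 1)"
proof -
  have e1: "e \<ge> 1" using e by simp
  define D where "D = Dk e n k"
  have gm: "g = mat n id D" using g mpow_lam[of n e k] n by (simp add: D_def)
  obtain \<sigma> c where v: "valid e n \<sigma> c" and gm2: "g = mat n \<sigma> c" using gG Geen_iff[OF e1] by blast
  have "\<forall>i\<in>{1..n}. \<sigma> i = id i \<and> c i = D i"
    by (rule mat_inj) (use valid_range[OF v] valid_nz[OF v e1] gm gm2 in \<open>auto simp: id_def\<close>)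
  then have vD: "valid e n id D" by (rule valid_cong[OF v])
  have dne: "zeta e ^ k \<noteq> 1" by (rule zeta_pow_ne1) (use k e in auto)
  have Db: "\<And>b. b \<noteq> 1 \<Longrightarrow> D b = zeta e ^ k" by (simp add: D_def Dk_def)
  have len: "wlen e n g = n * (n - 1)"
  proof -
    have "\<forall>p\<in>Pairs n. pc id D (fst p) (snd p) = 2"
      using dne Db by (auto simp: pc_def Pairs_def)
    then show ?thesis using wlen_mat[OF e n vD] fl_all2 gm by simp
  qed
  have key: "\<And>w. w \<in> Geen e n \<Longrightarrow> wlen e n (mmult n (ginv e n w) g) = wlen e n (mmult n g (ginv e n w))"
  proof -
    fix w assume w: "w \<in> Geen e n"
    obtain \<tau> d where vt: "valid e n \<tau> d" and vm: "ginv e n w = mat n \<tau> d"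
      using ginv_Geen[OF e1 w] Geen_iff[OF e1] by blast
    have inj: "inj_on \<tau> {1..n}" using vt by (simp add: valid_def bij_betw_def)
    have rg: "\<forall>i\<in>{1..n}. \<tau> i \<in> {1..n}" using valid_range[OF vt] .
    have m1: "mmult n (ginv e n w) g = mat n (id \<circ> \<tau>) (\<lambda>i. d i * D (\<tau> i))"
      unfolding vm gm by (rule mat_mult[OF rg])
    have m2: "mmult n g (ginv e n w) = mat n (\<tau> \<circ> id) (\<lambda>i. D i * d (id i))"
      unfolding vm gm by (rule mat_mult) simp
    have l1: "wlen e n (mmult n (ginv e n w) g) = fl n (id \<circ> \<tau>) (\<lambda>i. d i * D (\<tau> i))"
      using m1 wlen_mat[OF e n valid_mult[OF vt vD]] by simp
    have l2: "wlen e n (mmult n g (ginv e n w)) = fl n (\<tau> \<circ> id) (\<lambda>i. D i * d (id i))"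
      using m2 wlen_mat[OF e n valid_mult[OF vD vt]] by simp
    have "fl n (id \<circ> \<tau>) (\<lambda>i. d i * D (\<tau> i)) = fl n (\<tau> \<circ> id) (\<lambda>i. D i * d (id i))"
      unfolding fl_def
    proof (rule sum.cong)
      fix p assume p: "p \<in> Pairs n"
      obtain a b where pab: "p = (a, b)" by (cases p)
      have ab: "1 \<le> a" "a < b" "b \<le> n" using p pab by (auto simp: Pairs_def)
      show "pc (id \<circ> \<tau>) (\<lambda>i. d i * D (\<tau> i)) (fst p) (snd p) = pc (\<tau> \<circ> id) (\<lambda>i. D i * d (id i)) (fst p) (snd p)"
      proof (cases "\<tau> b < \<tau> a")
        case True then show ?thesis by (simp add: pc_def pab)
      next
        case False
        have "\<tau> a \<noteq> \<tau> b" using inj_onD[OF inj, of a b] ab by auto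
        moreover have "\<tau> a \<ge> 1" using rg ab by auto
        ultimately have "\<tau> b \<noteq> 1" using False by auto
        then have "D (\<tau> b) = D b" using Db ab by simp
        then show ?thesis using False by (simp add: pc_def pab mult.commute)
      qed
    qed simp
    then show "wlen e n (mmult n (ginv e n w) g) = wlen e n (mmult n g (ginv e n w))"
      using l1 l2 by simp
  qed
  have "balanced e n g"
    unfolding balanced_def interval_l_def interval_r_def prefix_le_def suffix_le_def
    using key by (auto simp: add.commute)
  with len show ?thesis by simp
qed


lemma mainF:
  assumes e: "e \<ge> 2" and n: "n \<ge> 2" and gG: "g \<in> Geen e n"
    and bal: "balanced e n g" and len: "wlen e n g = n * (n - 1)"
  shows "\<exists>k. 1 \<le> k \<and> k \<le> e - 1 \<and> g = mpow n (lam e n) k"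
proof -
  have e1: "e \<ge> 1" using e by simp
  obtain \<sigma> c where v: "valid e n \<sigma> c" and gm: "g = mat n \<sigma> c" using gG Geen_iff[OF e1] by blast
  have inj: "inj_on \<sigma> {1..n}" using v by (simp add: valid_def bij_betw_def)
  have all2: "\<forall>p\<in>Pairs n. pc \<sigma> c (fst p) (snd p) = 2"
    using fl_max_all2 len wlen_mat[OF e n v] gm by simp
  have pc2: "\<And>a b. 1 \<le> a \<Longrightarrow> a < b \<Longrightarrow> b \<le> n \<Longrightarrow> \<not> \<sigma> b < \<sigma> a \<and> c b \<noteq> 1"
  proof -
    fix a b assume "1 \<le> a" "a < b" "b \<le> n"
    then have "pc \<sigma> c a b = 2" using all2 by (auto simp: Pairs_def)
    then show "\<not> \<sigma> b < \<sigma> a \<and> c b \<noteq> 1" by (auto simp: pc_def split: if_splits)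
  qed
  have sid: "\<forall>i\<in>{1..n}. \<sigma> i = i"
  proof (rule mono_id)
    show "bij_betw \<sigma> {1..n} {1..n}" using v by (simp add: valid_def)
    show "\<forall>m. 2 \<le> m \<longrightarrow> m \<le> n \<longrightarrow> \<sigma> (m - 1) < \<sigma> m"
    proof (intro allI impI)
      fix m assume m: "2 \<le> m" "m \<le> n"
      have "\<not> \<sigma> m < \<sigma> (m - 1)" using pc2[of "m - 1" m] m by auto
      moreover have "\<sigma> (m - 1) \<noteq> \<sigma> m"
      proof
        assume "\<sigma> (m - 1) = \<sigma> m"
        moreover have "m - 1 \<in> {1..n}" "m \<in> {1..n}" using m by auto
        ultimately have "m - 1 = m" using inj_onD[OF inj] by blast
        then show False using m by simp
      qed
      ultimately show "\<sigma> (m - 1) < \<sigma> m" by simp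
    qed
  qed
  have cne: "\<And>b. 2 \<le> b \<Longrightarrow> b \<le> n \<Longrightarrow> c b \<noteq> 1" using pc2[of 1] by auto
  have ceq: "\<forall>i\<in>{1..n}. \<sigma> i = id i \<and> c i = c i" using sid by simp
  have vid: "valid e n id c" using valid_cong[OF v ceq] .
  have gid: "g = mat n id c" using gm mat_cong[OF ceq] by (simp add: id_def)
  have croot: "\<And>i. i \<in> {1..n} \<Longrightarrow> c i ^ e = 1" using vid by (simp add: valid_def)
  have cnz: "\<And>i. i \<in> {1..n} \<Longrightarrow> c i \<noteq> 0" using valid_nz[OF vid e1] by blast
  have step: "\<And>j. 2 \<le> j \<Longrightarrow> Suc j \<le> n \<Longrightarrow> c j = c (Suc j)"
  proof (rule ccontr)
    fix j assume j: "2 \<le> j" "Suc j \<le> n" and ne: "c j \<noteq> c (Suc j)"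
    define y where "y = c (Suc j)"
    have ynz: "y \<noteq> 0" using cnz[of "Suc j"] j by (simp add: y_def)
    have y1: "y \<noteq> 1" using cne[of "Suc j"] j by (simp add: y_def)
    have ye: "y ^ e = 1" using croot[of "Suc j"] j by (simp add: y_def)
    have cj: "c j \<noteq> 1" using cne[of j] j by simp
    define r where "r = (\<lambda>i. (if i = 1 then inverse y else 1) * (if i = Suc j then y else (1::complex)))"
    define r' where "r' = (\<lambda>i. (if i = 1 then y else 1) * (if i = j then inverse y else (1::complex)))"
    have vu: "valid e n (sw j) r" unfolding valid_def
    proof (intro conjI)
      show "bij_betw (sw j) {1..n} {1..n}" using sw_bij[of j n] j by simp
      show "\<forall>i\<in>{1..n}. r i ^ e = 1" using ye by (auto simp: r_def power_mult_distrib power_inverse)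
      show "prod r {1..n} = 1" unfolding r_def using j ynz by (subst prod_two) auto
    qed
    have vv: "valid e n (sw j) r'" unfolding valid_def
    proof (intro conjI)
      show "bij_betw (sw j) {1..n} {1..n}" using sw_bij[of j n] j by simp
      show "\<forall>i\<in>{1..n}. r' i ^ e = 1" using ye by (auto simp: r'_def power_mult_distrib power_inverse)
      show "prod r' {1..n} = 1" unfolding r'_def using j ynz by (subst prod_two) auto
    qed
    define u where "u = mat n (sw j) r"
    define v' where "v' = mat n (sw j) r'"
    have uG: "u \<in> Geen e n" using vu Geen_iff[OF e1] u_def by blast
    have vG: "v' \<in> Geen e n" using vv Geen_iff[OF e1] v'_def by blast
    have "mmult n u v' = mat n (sw j \<circ> sw j) (\<lambda>i. r i * r' (sw j i))"
      unfolding u_def v'_def by (rule mat_mult[OF valid_range[OF vu]])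
    also have "\<dots> = mat n id (\<lambda>_. 1)"
    proof (rule mat_cong, intro ballI conjI)
      fix i assume "i \<in> {1..n}"
      show "(sw j \<circ> sw j) i = id i" by simp
      show "r i * r' (sw j i) = 1" using j ynz by (auto simp: r_def r'_def sw_def)
    qed
    finally have uv: "mmult n u v' = mone n" by (simp add: mone_mat)
    have gi: "ginv e n u = v'" by (rule ginv_eq[OF e1 uG vG uv])
    define c1 where "c1 = (\<lambda>i. r' i * c (sw j i))"
    define c2 where "c2 = (\<lambda>i. c i * r' (id i))"
    have h1: "mmult n (ginv e n u) g = mat n (id \<circ> sw j) c1"
      unfolding gi v'_def gid c1_def by (rule mat_mult[OF valid_range[OF vv]])
    have h2: "mmult n g (ginv e n u) = mat n (sw j \<circ> id) c2"
      unfolding gi v'_def gid c2_def by (rule mat_mult) simp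
    have lu: "wlen e n u = fl n (sw j) r" using wlen_mat[OF e n vu] u_def by simp
    have l1: "wlen e n (mmult n (ginv e n u) g) = fl n (id \<circ> sw j) c1"
      using h1 wlen_mat[OF e n valid_mult[OF vv vid]] by (simp add: c1_def)
    have l2: "wlen e n (mmult n g (ginv e n u)) = fl n (sw j \<circ> id) c2"
      using h2 wlen_mat[OF e n valid_mult[OF vid vv]] by (simp add: c2_def)
    have lg: "wlen e n g = n * (n - 1)" by (rule len)
    define q where "q = (j, Suc j)"
    have qP: "q \<in> Pairs n" using j by (simp add: q_def Pairs_def)
    have swlt: "\<And>a b. 1 \<le> a \<Longrightarrow> a < b \<Longrightarrow> (sw j b < sw j a \<longleftrightarrow> (a, b) = q)"
      by (auto simp: sw_def q_def)
    define I where "I = (\<lambda>p::nat\<times>nat. if p = q then (1::nat) else 0)"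
    define S where "S = (\<lambda>(b::nat) (p::nat\<times>nat). if snd p = b then (1::nat) else 0)"
    have sI: "(\<Sum>p\<in>Pairs n. I p) = 1" unfolding I_def using qP by simp
    have sS: "\<And>b. b \<le> n \<Longrightarrow> (\<Sum>p\<in>Pairs n. S b p) = b - 1" unfolding S_def by (rule sum_snd)
    have s2: "(\<Sum>p\<in>Pairs n. (2::nat)) = n * (n - 1)" using card_Pairs[of n] by simp
    have pu: "\<And>p. p \<in> Pairs n \<Longrightarrow> pc (sw j) r (fst p) (snd p) + I p = 2 * S (Suc j) p"
    proof -
      fix p assume p: "p \<in> Pairs n"
      obtain a b where pab: "p = (a, b)" by (cases p)
      have ab: "1 \<le> a" "a < b" "b \<le> n" using p pab by (auto simp: Pairs_def)
      have rb: "r b = (if b = Suc j then y else 1)" using ab by (simp add: r_def)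
      show "pc (sw j) r (fst p) (snd p) + I p = 2 * S (Suc j) p"
        using swlt[OF ab(1,2)] rb y1 ab by (auto simp: pc_def I_def S_def pab q_def)
    qed
    have p1: "\<And>p. p \<in> Pairs n \<Longrightarrow> pc (id \<circ> sw j) c1 (fst p) (snd p) + I p + 2 * S j p = 2"
    proof -
      fix p assume p: "p \<in> Pairs n"
      obtain a b where pab: "p = (a, b)" by (cases p)
      have ab: "1 \<le> a" "a < b" "b \<le> n" using p pab by (auto simp: Pairs_def)
      have cb: "c1 b = (if b = j then 1 else if b = Suc j then c j else c b)"
        using ab j ynz by (auto simp: c1_def r'_def sw_def y_def)
      have "c1 b = 1 \<longleftrightarrow> b = j" using cb cj cne[of b] ab by auto
      then show "pc (id \<circ> sw j) c1 (fst p) (snd p) + I p + 2 * S j p = 2"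
        using swlt[OF ab(1,2)] ab by (auto simp: pc_def I_def S_def pab q_def)
    qed
    have p2: "\<And>p. p \<in> Pairs n \<Longrightarrow> pc (sw j \<circ> id) c2 (fst p) (snd p) + I p = 2"
    proof -
      fix p assume p: "p \<in> Pairs n"
      obtain a b where pab: "p = (a, b)" by (cases p)
      have ab: "1 \<le> a" "a < b" "b \<le> n" using p pab by (auto simp: Pairs_def)
      have cb: "c2 b = (if b = j then c j * inverse y else c b)"
        using ab j by (auto simp: c2_def r'_def)
      have "c j * inverse y \<noteq> 1"
      proof
        assume "c j * inverse y = 1"
        then have "c j = y" using ynz by (simp add: field_simps)
        then show False using ne y_def by simp
      qed
      then have "c2 b \<noteq> 1" using cb cne[of b] ab by auto
      then show "pc (sw j \<circ> id) c2 (fst p) (snd p) + I p = 2"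
        using swlt[OF ab(1,2)] ab by (auto simp: pc_def I_def pab q_def)
    qed
    have eu: "fl n (sw j) r + 1 = 2 * j"
    proof -
      have "(\<Sum>p\<in>Pairs n. pc (sw j) r (fst p) (snd p) + I p) = (\<Sum>p\<in>Pairs n. 2 * S (Suc j) p)"
        using pu by (rule sum.cong[OF refl])
      then show ?thesis using sI sS[of "Suc j"] j by (simp add: sum.distrib sum_distrib_left[symmetric] fl_def)
    qed
    have e1': "fl n (id \<circ> sw j) c1 + 1 + 2 * (j - 1) = n * (n - 1)"
    proof -
      have "(\<Sum>p\<in>Pairs n. pc (id \<circ> sw j) c1 (fst p) (snd p) + I p + 2 * S j p) = (\<Sum>p\<in>Pairs n. 2)"
        using p1 by (rule sum.cong[OF refl])
      then show ?thesis using sI sS[of j] j s2 by (simp add: sum.distrib sum_distrib_left[symmetric] fl_def)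
    qed
    have e2: "fl n (sw j \<circ> id) c2 + 1 = n * (n - 1)"
    proof -
      have "(\<Sum>p\<in>Pairs n. pc (sw j \<circ> id) c2 (fst p) (snd p) + I p) = (\<Sum>p\<in>Pairs n. 2)"
        using p2 by (rule sum.cong[OF refl])
      then show ?thesis using sI s2 by (simp add: sum.distrib fl_def)
    qed
    have pre: "prefix_le e n u g" unfolding prefix_le_def using lu l1 lg eu e1' j by simp
    have nsuf: "\<not> suffix_le e n u g" unfolding suffix_le_def using lu l2 lg eu e2 j by simp
    have "u \<in> interval_l e n g" using uG pre by (simp add: interval_l_def)
    moreover have "u \<notin> interval_r e n g" using nsuf by (simp add: interval_r_def)
    ultimately show False using bal by (simp add: balanced_def)
  qed
  define \<delta> where "\<delta> = c 2"
  have call: "\<And>i. 2 \<le> i \<Longrightarrow> i \<le> n \<Longrightarrow> c i = \<delta>"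
  proof -
    fix i :: nat assume "2 \<le> i" "i \<le> n"
    then show "c i = \<delta>"
    proof (induction i rule: nat_induct_at_least)
      case base then show ?case by (simp add: \<delta>_def)
    next
      case (Suc m) then show ?case using step[of m] by simp
    qed
  qed
  have de: "\<delta> ^ e = 1" using croot[of 2] n by (simp add: \<delta>_def)
  have d1: "\<delta> \<noteq> 1" using cne[of 2] n by (simp add: \<delta>_def)
  obtain k where k: "k < e" "\<delta> = zeta e ^ k" using root_is_zeta_pow[OF e1 de] by blast
  have k0: "k \<noteq> 0" proof assume "k = 0" then show False using k d1 by simp qed
  have "(\<Prod>i\<in>{1..n}. c i) = c 1 * (\<Prod>i\<in>{2..n}. c i)"
    using n by (simp add: prod.atLeast_Suc_atMost numeral_2_eq_2)
  also have "(\<Prod>i\<in>{2..n}. c i) = (\<Prod>i\<in>{2..n}. \<delta>)" using call by (auto intro!: prod.cong)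
  also have "\<dots> = \<delta> ^ (n - 1)" by simp
  finally have "c 1 * \<delta> ^ (n - 1) = 1" using vid by (simp add: valid_def)
  then have c1: "c 1 = inverse (\<delta> ^ (n - 1))" using inverse_unique[of "\<delta> ^ (n - 1)" "c 1"] by (simp add: mult.commute)
  have "g = mat n id (Dk e n k)"
    unfolding gid
  proof (rule mat_cong, intro ballI conjI)
    fix i assume i: "i \<in> {1..n}"
    show "id i = id i" by simp
    show "c i = Dk e n k i"
    proof (cases "i = 1")
      case True
      have "inverse ((zeta e ^ k) ^ (n - 1)) = inverse (zeta e ^ (n - 1)) ^ k"
        by (simp add: power_mult[symmetric] mult.commute power_inverse)
      then show ?thesis using True c1 k by (simp add: Dk_def)
    next
      case False then show ?thesis using i call[of i] k by (simp add: Dk_def)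
    qed
  qed
  then have "g = mpow n (lam e n) k" using mpow_lam[of n e k] n by simp
  then show ?thesis using k k0 by (intro exI[of _ k]) auto
qed


theorem mainTheorem6:
  fixes e n :: nat and g :: cmat
  assumes "e \<ge> 2" and "n \<ge> 2" and "g \<in> Geen e n"
  shows "(balanced e n g \<and> wlen e n g = n * (n - 1)) \<longleftrightarrow>
         (\<exists>k. 1 \<le> k \<and> k \<le> e - 1 \<and> g = mpow n (lam e n) k)"
  using mainF[OF assms] mainB[OF assms(1,2) _ _ assms(3)] by blast

end
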